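(* For $t,a\in[0,1]$, the map $T_t\otimes\theta_a:\mathcal{M}_2\otimes\mathcal{M}_2\to\mathcal{M}_2\otimes\mathcal{M}_2$ is positive if and only if $t\le\frac{1}{2a+1}$.
   Context: For $t\in[0,1]$ the qubit depolarizing channel is $T_t(X)=(1-t)\mathrm{Tr}(X)\frac{I_2}{2}+tX$, and for $a\in[0,1]$, $\theta_a(X)=(1-a)X+aX^T$, both maps $\mathcal{M}_2\to\mathcal{M}_2$. *)

theory Defs
  imports "HOL-Analysis.Analysis"
begin

text \<open>M_2 is modelled as complex^2^2; M_2 (x) M_2 as complex^(2*2)^(2*2), where the
row index (i,k) has i the index of the first tensor factor and k that of the second.\<close>

type_synonym m2 = "complex^2^2"
type_synonym m22 = "complex^(2 \<times> 2)^(2 \<times> 2)"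

definition psd :: "complex^'n^'n \<Rightarrow> bool" where
  "psd A \<longleftrightarrow> (\<forall>v :: complex^'n.
     (let z = (\<Sum>i\<in>UNIV. \<Sum>j\<in>UNIV. cnj (v$i) * A$i$j * v$j) in Im z = 0 \<and> Re z \<ge> 0))"

definition positive_map :: "(complex^'n^'n \<Rightarrow> complex^'m^'m) \<Rightarrow> bool" where
  "positive_map \<Phi> \<longleftrightarrow> (\<forall>X. psd X \<longrightarrow> psd (\<Phi> X))"

definition depol :: "real \<Rightarrow> m2 \<Rightarrow> m2" where
  "depol t X = (\<chi> p q. complex_of_real (1 - t) * trace X * (if p = q then 1/2 else 0)
                       + complex_of_real t * X$p$q)"

definition theta :: "real \<Rightarrow> m2 \<Rightarrow> m2" where
  "theta a X = (\<chi> p q. complex_of_real (1 - a) * X$p$q + complex_of_real a * (transpose X)$p$q)"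

definition matunit :: "2 \<Rightarrow> 2 \<Rightarrow> m2" where
  "matunit i j = (\<chi> p q. if p = i \<and> q = j then 1 else 0)"

text \<open>Tensor product of two linear maps on M_2, defined by linear extension of
  (Phi (x) Psi)(E_ij (x) E_kl) = Phi(E_ij) (x) Psi(E_kl).\<close>
definition tensor_map :: "(m2 \<Rightarrow> m2) \<Rightarrow> (m2 \<Rightarrow> m2) \<Rightarrow> m22 \<Rightarrow> m22" where
  "tensor_map \<Phi> \<Psi> X = (\<chi> pr qs.
     \<Sum>i\<in>UNIV. \<Sum>j\<in>UNIV. \<Sum>k\<in>UNIV. \<Sum>l\<in>UNIV.
       X$(i,k)$(j,l) * (\<Phi> (matunit i j))$(fst pr)$(fst qs) * (\<Psi> (matunit k l))$(snd pr)$(snd qs))"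

end

theory Submission
  imports Defs
begin


lemma sum22: "sum f (UNIV::(2\<times>2) set) = f(1,1)+f(1,2)+f(2,1)+f(2,2)"
proof -
  have "sum f (UNIV::(2\<times>2) set) = (\<Sum>i\<in>(UNIV::2 set). \<Sum>k\<in>(UNIV::2 set). f (i,k))"
    by (simp add: sum.cartesian_product)
  then show ?thesis by (simp add: sum_2 add.assoc)
qed

definition Qf :: "complex^'n^'n \<Rightarrow> complex^'n \<Rightarrow> complex" where
  "Qf A v = (\<Sum>i\<in>UNIV. \<Sum>j\<in>UNIV. cnj (v$i) * A$i$j * v$j)"

definition Kg :: "(m2 \<Rightarrow> m2) \<Rightarrow> (m2 \<Rightarrow> m2) \<Rightarrow> complex^(2\<times>2) \<Rightarrow> 2\<times>2 \<Rightarrow> 2\<times>2 \<Rightarrow> complex" where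
  "Kg \<Phi> \<Psi> v p q = (\<Sum>r\<in>UNIV. \<Sum>s\<in>UNIV. cnj (v$r) * (\<Phi> (matunit (fst p) (fst q)))$(fst r)$(fst s)
      * (\<Psi> (matunit (snd p) (snd q)))$(snd r)$(snd s) * v$s)"

lemma Qf_tensor: "Qf (tensor_map \<Phi> \<Psi> X) v = (\<Sum>p\<in>UNIV. \<Sum>q\<in>UNIV. X$p$q * Kg \<Phi> \<Psi> v p q)"
  unfolding Qf_def Kg_def tensor_map_def
  by (simp add: sum22 sum_2 algebra_simps)




lemma depol_ent: "depol t (matunit i j) $ p $ q =
  complex_of_real (1-t) * (if i = j then 1 else 0) * (if p = q then 1/2 else 0) + complex_of_real t * (if p = i \<and> q = j then 1 else 0)"
  using exhaust_2[of j] by (auto simp add: depol_def matunit_def trace_def sum_2)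

lemma theta_ent: "theta a (matunit k l) $ p $ q =
  complex_of_real (1-a) * (if p = k \<and> q = l then 1 else 0) + complex_of_real a * (if q = k \<and> p = l then 1 else 0)"
  by (simp add: theta_def matunit_def transpose_def)

definition nsq :: "complex \<Rightarrow> real" where "nsq z = (cmod z)^2"
lemma of_real_nsq: "complex_of_real (nsq z) = z * cnj z"
  unfolding nsq_def by (rule complex_norm_square)

definition Sm :: "complex^(2\<times>2) \<Rightarrow> complex^(2\<times>2) \<Rightarrow> 2 \<Rightarrow> 2 \<Rightarrow> complex" where
  "Sm u v i j = u$(i,1) * cnj (v$(j,1)) + u$(i,2) * cnj (v$(j,2))"
definition Wm :: "complex^(2\<times>2) \<Rightarrow> complex^(2\<times>2) \<Rightarrow> 2 \<Rightarrow> 2 \<Rightarrow> complex" where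
  "Wm u v i j = u$(i,1) * v$(j,1) + u$(i,2) * v$(j,2)"

definition Rval :: "real \<Rightarrow> real \<Rightarrow> complex^(2\<times>2) \<Rightarrow> complex^(2\<times>2) \<Rightarrow> real" where
  "Rval t a u v = (let S = Sm u v; W = Wm u v;
     sS = nsq (S 1 1) + nsq (S 1 2) + nsq (S 2 1) + nsq (S 2 2);
     sW = nsq (W 1 1) + nsq (W 1 2) + nsq (W 2 1) + nsq (W 2 2) in
     t * ((1-a) * nsq (S 1 1 + S 2 2) + a * (nsq (W 1 1) + nsq (W 2 2) + 2 * nsq ((W 1 2 + W 2 1)/2)
           - 2 * nsq ((W 1 2 - W 2 1)/2)) + a*(1-a) * sS + a^2 * sW)
     + ((1-t)/2 - a*t) * ((1-a) * sS + a * sW))"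

lemma form_eq: "Qf (\<chi> x y. Kg (depol t) (theta a) v y x) u = complex_of_real (Rval t a u v)"
  unfolding Qf_def Kg_def Rval_def Let_def Sm_def Wm_def
  apply (simp add: sum22 sum_2 depol_ent theta_ent of_real_nsq)
  apply (simp add: field_simps)
  apply algebra
  done




definition nn :: "complex \<Rightarrow> bool" where "nn z \<longleftrightarrow> Im z = 0 \<and> 0 \<le> Re z"
definition fS :: "'n set \<Rightarrow> ('n \<Rightarrow> 'n \<Rightarrow> complex) \<Rightarrow> ('n \<Rightarrow> complex) \<Rightarrow> complex" where
  "fS S A v = (\<Sum>i\<in>S. \<Sum>j\<in>S. cnj (v i) * A i j * v j)"
definition psdS :: "'n set \<Rightarrow> ('n \<Rightarrow> 'n \<Rightarrow> complex) \<Rightarrow> bool" where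
  "psdS S A \<longleftrightarrow> (\<forall>v. nn (fS S A v))"

lemma fS_restrict:
  assumes "finite S" "T \<subseteq> S" "\<forall>i\<in>S-T. v i = 0"
  shows "fS S A v = fS T A v"
proof -
  have "(\<Sum>i\<in>S. \<Sum>j\<in>S. cnj (v i) * A i j * v j) = (\<Sum>i\<in>T. \<Sum>j\<in>S. cnj (v i) * A i j * v j)"
    using assms by (intro sum.mono_neutral_right) auto
  also have "\<dots> = (\<Sum>i\<in>T. \<Sum>j\<in>T. cnj (v i) * A i j * v j)"
    using assms by (intro sum.cong refl sum.mono_neutral_right) auto
  finally show ?thesis unfolding fS_def .
qed

lemma fS_two:
  assumes "finite S" "p \<in> S" "q \<in> S" "p \<noteq> q"
  shows "fS S A (\<lambda>i. if i = p then x else if i = q then y else 0) =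
     cnj x * A p p * x + cnj x * A p q * y + cnj y * A q p * x + cnj y * A q q * y"
proof -
  have "fS S A (\<lambda>i. if i = p then x else if i = q then y else 0) = fS {p,q} A (\<lambda>i. if i = p then x else if i = q then y else 0)"
    using assms by (intro fS_restrict) auto
  also have "\<dots> = cnj x * A p p * x + cnj x * A p q * y + cnj y * A q p * x + cnj y * A q q * y"
    using assms unfolding fS_def by (simp add: algebra_simps)
  finally show ?thesis .
qed

lemma fS_one:
  assumes "finite S" "p \<in> S"
  shows "fS S A (\<lambda>i. if i = p then x else 0) = cnj x * A p p * x"
proof -
  have "fS S A (\<lambda>i. if i = p then x else 0) = fS {p} A (\<lambda>i. if i = p then x else 0)"
    using assms by (intro fS_restrict) auto
  thus ?thesis unfolding fS_def by simp
qed

lemma psd_diag: assumes "finite S" "psdS S A" "p \<in> S" shows "nn (A p p)"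
proof -
  have "nn (fS S A (\<lambda>i. if i = p then 1 else 0))" using assms(2) unfolding psdS_def by blast
  thus ?thesis using fS_one[OF assms(1,3), of A 1] by simp
qed

lemma psd_herm:
  assumes "finite S" "psdS S A" "p \<in> S" "q \<in> S"
  shows "A q p = cnj (A p q)"
proof (cases "p = q")
  case True
  then show ?thesis using psd_diag[OF assms(1,2,3)] unfolding nn_def by (simp add: complex_eq_iff)
next
  case False
  have d1: "Im (A p p) = 0" "Im (A q q) = 0" using psd_diag[OF assms(1,2)] assms(3,4) unfolding nn_def by auto
  have "nn (fS S A (\<lambda>i. if i = p then 1 else if i = q then 1 else 0))" using assms(2) unfolding psdS_def by blast
  hence z1: "nn (cnj 1 * A p p * 1 + cnj 1 * A p q * 1 + cnj 1 * A q p * 1 + cnj 1 * A q q * 1)"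
    using fS_two[OF assms(1,3,4) False, of A 1 1] by simp
  have "nn (fS S A (\<lambda>i. if i = p then 1 else if i = q then \<i> else 0))" using assms(2) unfolding psdS_def by blast
  hence z2: "nn (cnj 1 * A p p * 1 + cnj 1 * A p q * \<i> + cnj \<i> * A q p * 1 + cnj \<i> * A q q * \<i>)"
    using fS_two[OF assms(1,3,4) False, of A 1 \<i>] by simp
  show ?thesis using z1 z2 d1 unfolding nn_def by (simp add: complex_eq_iff)
qed


lemma nn_add: "nn x \<Longrightarrow> nn y \<Longrightarrow> nn (x + y)" unfolding nn_def by simp

lemma nn_div: "nn x \<Longrightarrow> nn b \<Longrightarrow> nn (x / b)"
  unfolding nn_def by (simp add: Re_divide Im_divide)

lemma psd_sub:
  assumes "finite S'" "S \<subseteq> S'" "psdS S' A"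
  shows "psdS S A"
  unfolding psdS_def
proof
  fix v
  define v' :: "_ \<Rightarrow> complex" where "v' = (\<lambda>i. if i \<in> S then v i else 0)"
  have "nn (fS S' A v')" using assms(3) unfolding psdS_def by blast
  moreover have "fS S' A v' = fS S A v'" using assms(1,2) by (intro fS_restrict) (auto simp: v'_def)
  moreover have "fS S A v' = fS S A v" unfolding fS_def v'_def by (intro sum.cong refl) auto
  ultimately show "nn (fS S A v)" by simp
qed

lemma zero_col:
  assumes "finite S" "psdS S A" "r \<in> S" "q \<in> S" "A r r = 0"
  shows "A q r = 0"
proof (rule ccontr)
  assume nz: "A q r \<noteq> 0"
  hence qr: "q \<noteq> r" using assms(5) by auto
  define k where "k = complex_of_real ((Re (A q q) + 1) / (2 * cmod (A q r) ^ 2))"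
  define c where "c = - k * cnj (A q r)"
  have h: "A r q = cnj (A q r)" using psd_herm[OF assms(1,2,4,3)] .
  have "nn (fS S A (\<lambda>i. if i = q then 1 else if i = r then c else 0))" using assms(2) unfolding psdS_def by blast
  hence z: "nn (A q q + A q r * c + cnj (A q r * c))"
    using fS_two[OF assms(1,4,3) qr, of A 1 c] assms(5) h by (simp add: mult.commute)
  have "A q r * c = - k * (A q r * cnj (A q r))" unfolding c_def by (simp add: algebra_simps)
  also have "\<dots> = - k * complex_of_real (cmod (A q r) ^ 2)" by (simp only: complex_norm_square)
  also have "\<dots> = - complex_of_real ((Re (A q q) + 1) / 2)" using nz unfolding k_def
    by (simp add: field_simps)
  finally have e: "A q r * c = - complex_of_real ((Re (A q q) + 1) / 2)" .
  show False using z unfolding e nn_def by simp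
qed


lemma schur_psd:
  assumes fin: "finite S" and rS: "r \<notin> S" and psd: "psdS (insert r S) B" and bnz: "B r r \<noteq> 0"
  shows "psdS S (\<lambda>i j. B i j - B i r * B r j / B r r)"
  unfolding psdS_def
proof
  fix v :: "_ \<Rightarrow> complex"
  define \<beta> where "\<beta> = B r r"
  have fin': "finite (insert r S)" using fin by simp
  have nb: "nn \<beta>" unfolding \<beta>_def using psd_diag[OF fin' psd] by simp
  have cb: "cnj \<beta> = \<beta>" using nb unfolding nn_def by (simp add: complex_eq_iff)
  have b0: "\<beta> \<noteq> 0" using bnz unfolding \<beta>_def .
  define \<alpha> where "\<alpha> = (\<Sum>j\<in>S. B r j * v j)"
  define Q where "Q = (\<Sum>i\<in>S. \<Sum>j\<in>S. cnj (v i) * B i j * v j)"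
  define wr where "wr = - \<alpha> / \<beta>"
  define w where "w = (\<lambda>i. if i \<in> S then v i else wr)"
  have herm: "B i r = cnj (B r i)" if "i \<in> S" for i
    using psd_herm[OF fin' psd, of r i] that by simp
  have ca: "(\<Sum>i\<in>S. cnj (v i) * B i r) = cnj \<alpha>"
    unfolding \<alpha>_def by (simp add: herm mult.commute)
  have e1: "fS (insert r S) B w = cnj wr * \<beta> * wr + (\<Sum>j\<in>S. cnj wr * B r j * v j)
      + ((\<Sum>i\<in>S. cnj (v i) * B i r * wr) + Q)"
    unfolding fS_def Q_def w_def \<beta>_def using fin rS by (simp add: sum.distrib)
  have e2: "(\<Sum>j\<in>S. cnj wr * B r j * v j) = cnj wr * \<alpha>"
    unfolding \<alpha>_def by (simp add: sum_distrib_left mult.assoc)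
  have e3: "(\<Sum>i\<in>S. cnj (v i) * B i r * wr) = cnj \<alpha> * wr"
    by (simp only: sum_distrib_right[symmetric] ca)
  have e4: "fS S (\<lambda>i j. B i j - B i r * B r j / B r r) v = Q - cnj \<alpha> * \<alpha> / \<beta>"
  proof -
    have "fS S (\<lambda>i j. B i j - B i r * B r j / B r r) v
        = (\<Sum>i\<in>S. \<Sum>j\<in>S. cnj (v i) * B i j * v j - (cnj (v i) * B i r / \<beta>) * (B r j * v j))"
      unfolding fS_def \<beta>_def by (intro sum.cong refl) (simp add: algebra_simps)
    also have "\<dots> = Q - (\<Sum>i\<in>S. (cnj (v i) * B i r / \<beta>) * \<alpha>)"
      unfolding Q_def \<alpha>_def by (simp add: sum_subtractf sum_distrib_left)
    also have "\<dots> = Q - cnj \<alpha> * \<alpha> / \<beta>"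
      using ca by (simp add: sum_distrib_right[symmetric] sum_divide_distrib[symmetric])
    finally show ?thesis .
  qed
  have "fS (insert r S) B w = Q - cnj \<alpha> * \<alpha> / \<beta>"
    unfolding e1 e2 e3 unfolding wr_def using cb b0 by (simp add: field_simps)
  moreover have "nn (fS (insert r S) B w)" using psd unfolding psdS_def by blast
  ultimately show "nn (fS S (\<lambda>i j. B i j - B i r * B r j / B r r) v)" using e4 by simp
qed


lemma trace_nn:
  "finite S \<Longrightarrow> psdS S A \<Longrightarrow> psdS S B \<Longrightarrow> nn (\<Sum>p\<in>S. \<Sum>q\<in>S. A p q * B q p)"
proof (induction S arbitrary: A B rule: finite_induct)
  case empty
  then show ?case by (simp add: nn_def)
next
  case (insert r S)
  have fin': "finite (insert r S)" using insert.hyps by simp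
  have AS: "psdS S A" using psd_sub[OF fin' _ insert.prems(1)] by blast
  show ?case
  proof (cases "B r r = 0")
    case True
    have col: "B q r = 0" if "q \<in> insert r S" for q
      using zero_col[OF fin' insert.prems(2) _ that True] by simp
    have row: "B r q = 0" if "q \<in> insert r S" for q
      using psd_herm[OF fin' insert.prems(2) that, of r] col[OF that] by simp
    have BS: "psdS S B" using psd_sub[OF fin' _ insert.prems(2)] by blast
    have "(\<Sum>p\<in>insert r S. \<Sum>q\<in>insert r S. A p q * B q p) = (\<Sum>p\<in>S. \<Sum>q\<in>S. A p q * B q p)"
      using insert.hyps col row by (simp add: sum.insert)
    then show ?thesis using insert.IH[OF AS BS] by simp
  next
    case False
    define \<beta> where "\<beta> = B r r"
    define B' where "B' = (\<lambda>i j. B i j - B i r * B r j / B r r)"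
    have B'S: "psdS S B'" unfolding B'_def by (rule schur_psd[OF insert.hyps(1,2) insert.prems(2) False])
    have nb: "nn \<beta>" unfolding \<beta>_def using psd_diag[OF fin' insert.prems(2)] by simp
    have herm: "B r p = cnj (B p r)" if "p \<in> insert r S" for p
      using psd_herm[OF fin' insert.prems(2) that, of r] by simp
    have split: "(\<Sum>p\<in>insert r S. \<Sum>q\<in>insert r S. A p q * B q p)
        = (\<Sum>p\<in>insert r S. \<Sum>q\<in>insert r S. A p q * B' q p)
          + (\<Sum>p\<in>insert r S. \<Sum>q\<in>insert r S. A p q * (B q r * B r p)) / \<beta>"
    proof -
      have "(\<Sum>p\<in>insert r S. \<Sum>q\<in>insert r S. A p q * B q p)
        = (\<Sum>p\<in>insert r S. \<Sum>q\<in>insert r S. A p q * B' q p + A p q * (B q r * B r p) / \<beta>)"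
        unfolding B'_def \<beta>_def using False by (intro sum.cong refl) (simp add: field_simps)
      also have "\<dots> = (\<Sum>p\<in>insert r S. \<Sum>q\<in>insert r S. A p q * B' q p)
          + (\<Sum>p\<in>insert r S. \<Sum>q\<in>insert r S. A p q * (B q r * B r p) / \<beta>)"
        by (simp add: sum.distrib)
      also have "\<dots> = (\<Sum>p\<in>insert r S. \<Sum>q\<in>insert r S. A p q * B' q p)
          + (\<Sum>p\<in>insert r S. \<Sum>q\<in>insert r S. A p q * (B q r * B r p)) / \<beta>"
        by (simp add: sum_divide_distrib)
      finally show ?thesis .
    qed
    have z1: "B' q r = 0" "B' r q = 0" for q unfolding B'_def using False by simp_all
    have p1: "(\<Sum>p\<in>insert r S. \<Sum>q\<in>insert r S. A p q * B' q p) = (\<Sum>p\<in>S. \<Sum>q\<in>S. A p q * B' q p)"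
      using insert.hyps z1 by (simp add: sum.insert)
    have p2: "(\<Sum>p\<in>insert r S. \<Sum>q\<in>insert r S. A p q * (B q r * B r p)) = fS (insert r S) A (\<lambda>i. B i r)"
      unfolding fS_def by (intro sum.cong refl) (simp add: herm algebra_simps)
    have "nn (fS (insert r S) A (\<lambda>i. B i r))" using insert.prems(1) unfolding psdS_def by blast
    hence "nn ((\<Sum>p\<in>insert r S. \<Sum>q\<in>insert r S. A p q * (B q r * B r p)) / \<beta>)"
      unfolding p2 using nb by (rule nn_div)
    moreover have "nn (\<Sum>p\<in>insert r S. \<Sum>q\<in>insert r S. A p q * B' q p)"
      unfolding p1 by (rule insert.IH[OF AS B'S])
    ultimately show ?thesis unfolding split by (rule nn_add[rotated])
  qed
qed




lemma nsq_nonneg: "nsq z \<ge> 0" unfolding nsq_def by simp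

lemma two_cmod_le: "2 * (cmod x * cmod y) \<le> nsq x + nsq y"
proof -
  have "(cmod x - cmod y)^2 = cmod x^2 - 2*(cmod x*cmod y) + cmod y^2" by (simp add: power2_diff)
  moreover have "(cmod x - cmod y)^2 \<ge> 0" by simp
  ultimately show ?thesis unfolding nsq_def by linarith
qed

lemma det_bound: "2 * cmod (s11 * s22 - s12 * s21) \<le> nsq s11 + nsq s12 + nsq s21 + nsq s22"
proof -
  have "cmod (s11 * s22 - s12 * s21) \<le> cmod s11 * cmod s22 + cmod s12 * cmod s21"
    using norm_triangle_ineq4[of "s11 * s22" "s12 * s21"] by (simp add: norm_mult)
  thus ?thesis using two_cmod_le[of s11 s22] two_cmod_le[of s12 s21] by linarith
qed

lemma paral: "nsq w12 + nsq w21 = 2 * nsq ((w12 + w21)/2) + 2 * nsq ((w12 - w21)/2)"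
proof -
  have "complex_of_real (nsq w12 + nsq w21) = complex_of_real (2 * nsq ((w12 + w21)/2) + 2 * nsq ((w12 - w21)/2))"
    by (simp add: of_real_nsq field_simps)
  thus ?thesis using of_real_eq_iff by blast
qed

lemma detW_bound: "cmod (w11 * w22 - w12 * w21) \<ge> nsq ((w12 - w21)/2) - (nsq w11 + nsq w22)/2 - nsq ((w12 + w21)/2)"
proof -
  define s b where "s = (w12 + w21)/2" and "b = (w12 - w21)/2"
  have e: "w11 * w22 - w12 * w21 = b^2 + (w11 * w22 - s^2)" unfolding s_def b_def by (simp add: field_simps power2_eq_square)
  have f1: "cmod (b^2) \<le> cmod (w11 * w22 - w12 * w21) + cmod (w11 * w22 - s^2)"
    unfolding e by (metis add_diff_cancel_right' norm_triangle_ineq4)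
  have f2: "cmod (w11 * w22 - s^2) \<le> cmod w11 * cmod w22 + cmod s ^2"
    by (metis norm_mult norm_power norm_triangle_ineq4)
  have f3: "cmod (b^2) = nsq b" "cmod s ^ 2 = nsq s" unfolding nsq_def by (simp_all add: norm_power)
  have f4: "nsq b \<le> cmod (w11 * w22 - w12 * w21) + cmod w11 * cmod w22 + nsq s"
    using f1 f2 f3 by linarith
  have f5: "cmod w11 * cmod w22 \<le> (nsq w11 + nsq w22)/2" using two_cmod_le[of w11 w22] by (simp add: field_simps)
  have "nsq b - (nsq w11 + nsq w22)/2 - nsq s \<le> cmod (w11 * w22 - w12 * w21)"
    using f4 f5 by linarith
  thus ?thesis unfolding s_def b_def .
qed

lemma detSW: "cmod (Sm u v 1 1 * Sm u v 2 2 - Sm u v 1 2 * Sm u v 2 1) = cmod (Wm u v 1 1 * Wm u v 2 2 - Wm u v 1 2 * Wm u v 2 1)"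
proof -
  define dU where "dU = u$(1,1) * u$(2,2) - u$(1,2) * u$(2,1)"
  define dV where "dV = v$(1,1) * v$(2,2) - v$(1,2) * v$(2,1)"
  have "Sm u v 1 1 * Sm u v 2 2 - Sm u v 1 2 * Sm u v 2 1 = dU * cnj dV"
    unfolding Sm_def dU_def dV_def by (simp add: algebra_simps)
  moreover have "Wm u v 1 1 * Wm u v 2 2 - Wm u v 1 2 * Wm u v 2 1 = dU * dV"
    unfolding Wm_def dU_def dV_def by (simp add: algebra_simps)
  ultimately show ?thesis by (simp add: norm_mult)
qed

lemma lin_aux: "2*c \<le> s \<Longrightarrow> c = d \<Longrightarrow> x - (y1 + y2)/2 - z \<le> d \<Longrightarrow> 2*x - (y1 + y2 + 2*z) \<le> (s::real)"
  by argo

lemma Rval_nonneg: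
  assumes "0 \<le> a" "a \<le> 1" "0 \<le> t" "t * (2*a+1) \<le> 1"
  shows "Rval t a u v \<ge> 0"
proof -
  define S where "S = Sm u v"
  define W where "W = Wm u v"
  define sS where "sS = nsq (S 1 1) + nsq (S 1 2) + nsq (S 2 1) + nsq (S 2 2)"
  define sW where "sW = nsq (W 1 1) + nsq (W 1 2) + nsq (W 2 1) + nsq (W 2 2)"
  define A where "A = nsq (W 1 1) + nsq (W 2 2) + 2 * nsq ((W 1 2 + W 2 1)/2)"
  define B where "B = nsq ((W 1 2 - W 2 1)/2)"
  define T where "T = nsq (S 1 1 + S 2 2)"
  have F: "Rval t a u v = t * ((1-a) * T + a * (A - 2 * B) + a*(1-a) * sS + a^2 * sW)
     + ((1-t)/2 - a*t) * ((1-a) * sS + a * sW)"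
    unfolding Rval_def Let_def S_def W_def sS_def sW_def A_def B_def T_def by simp
  have h1: "sS \<ge> 2 * B - A"
    using det_bound[of "S 1 1" "S 2 2" "S 1 2" "S 2 1"] detSW[of u v]
      detW_bound[of "W 1 2" "W 2 1" "W 1 1" "W 2 2"]
    unfolding sS_def A_def B_def S_def W_def by (rule lin_aux)
  have h2: "sW = A + 2 * B"
    using paral[of "W 1 2" "W 2 1"] unfolding sW_def A_def B_def by linarith
  have A0: "A \<ge> 0" unfolding A_def using nsq_nonneg by (smt (verit))
  have B0: "B \<ge> 0" unfolding B_def using nsq_nonneg by simp
  have T0: "T \<ge> 0" unfolding T_def using nsq_nonneg by simp
  have sS0: "sS \<ge> 0" unfolding sS_def using nsq_nonneg by (smt (verit))
  have sW0: "sW \<ge> 0" unfolding sW_def using nsq_nonneg by (smt (verit))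
  have "a*(1-a) * sS \<ge> a*(1-a) * (2 * B - A)"
    using h1 assms by (intro mult_left_mono) auto
  hence G: "(1-a) * T + a * (A - 2 * B) + a*(1-a) * sS + a^2 * sW \<ge> (1-a) * T + 2 * a^2 * A"
    using h2 by (simp add: algebra_simps power2_eq_square)
  have "(1-a) * T + 2 * a^2 * A \<ge> 0" using assms T0 A0 by simp
  hence P1: "t * ((1-a) * T + a * (A - 2 * B) + a*(1-a) * sS + a^2 * sW) \<ge> 0"
    using G assms by simp
  have c0: "(1-t)/2 - a*t \<ge> 0" using assms by (simp add: algebra_simps)
  have "(1-a) * sS + a * sW \<ge> 0" using assms sS0 sW0 by simp
  hence "((1-t)/2 - a*t) * ((1-a) * sS + a * sW) \<ge> 0" using c0 by simp
  thus ?thesis using F P1 by linarith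
qed




lemma psd_psdS: "psd X \<Longrightarrow> psdS UNIV (\<lambda>i j. X$i$j)"
  unfolding psd_def psdS_def
proof
  fix v :: "_ \<Rightarrow> complex"
  assume "\<forall>v. let z = \<Sum>i\<in>UNIV. \<Sum>j\<in>UNIV. cnj (v $ i) * X $ i $ j * v $ j in Im z = 0 \<and> 0 \<le> Re z"
  hence "let z = \<Sum>i\<in>UNIV. \<Sum>j\<in>UNIV. cnj ((\<chi> i. v i) $ i) * X $ i $ j * (\<chi> i. v i) $ j in Im z = 0 \<and> 0 \<le> Re z"
    by blast
  thus "nn (fS UNIV (\<lambda>i j. X $ i $ j) v)" unfolding nn_def fS_def Let_def by simp
qed

lemma suff:
  assumes "0 \<le> a" "a \<le> 1" "0 \<le> t" "t * (2*a+1) \<le> 1" "psd X"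
  shows "psd (tensor_map (depol t) (theta a) X)"
  unfolding psd_def
proof
  fix v :: "complex^(2\<times>2)"
  define N :: m22 where "N = (\<chi> x y. Kg (depol t) (theta a) v y x)"
  have NS: "psdS UNIV (\<lambda>i j. N$i$j)" unfolding psdS_def
  proof
    fix u :: "2\<times>2 \<Rightarrow> complex"
    have "fS UNIV (\<lambda>i j. N$i$j) u = Qf N (\<chi> i. u i)" unfolding fS_def Qf_def by simp
    also have "\<dots> = complex_of_real (Rval t a (\<chi> i. u i) v)" unfolding N_def by (rule form_eq)
    finally show "nn (fS UNIV (\<lambda>i j. N$i$j) u)"
      using Rval_nonneg[OF assms(1-4)] unfolding nn_def by simp
  qed
  have "nn (\<Sum>p\<in>UNIV. \<Sum>q\<in>UNIV. X$p$q * N$q$p)"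
    using trace_nn[OF _ psd_psdS[OF assms(5)] NS] by simp
  moreover have "(\<Sum>p\<in>UNIV. \<Sum>q\<in>UNIV. X$p$q * N$q$p) = Qf (tensor_map (depol t) (theta a) X) v"
    unfolding Qf_tensor N_def by simp
  ultimately show "let z = \<Sum>i\<in>UNIV. \<Sum>j\<in>UNIV. cnj (v $ i) * tensor_map (depol t) (theta a) X $ i $ j * v $ j
          in Im z = 0 \<and> 0 \<le> Re z" unfolding Qf_def Let_def nn_def by simp
qed

definition Om :: m22 where "Om = (\<chi> p q. if fst p = snd p \<and> fst q = snd q then 1 else 0)"
definition wv :: "complex^(2\<times>2)" where "wv = (\<chi> p. if p = (1,2) then 1 else if p = (2,1) then -1 else 0)"

lemma Om_psd: "psd Om"
  unfolding psd_def Let_def Om_def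
  apply (simp add: sum22)
  apply (intro allI)
  subgoal for v
    using add_nonneg_nonneg[OF zero_le_power2[of "Re (v$(1,1)) + Re (v$(2,2))"] zero_le_power2[of "Im (v$(1,1)) + Im (v$(2,2))"]]
    by (simp add: power2_eq_square algebra_simps)
  done

lemma Om_val: "Qf (tensor_map (depol t) (theta a) Om) wv = complex_of_real (1 - t - 2*t*a)"
  unfolding Qf_def tensor_map_def Om_def wv_def
  by (simp add: sum22 sum_2 depol_ent theta_ent field_simps)


theorem mainTheorem16:
  fixes t a :: real
  assumes "0 \<le> t" "t \<le> 1" "0 \<le> a" "a \<le> 1"
  shows "positive_map (tensor_map (depol t) (theta a)) \<longleftrightarrow> t \<le> 1 / (2 * a + 1)"
proof
  assume "positive_map (tensor_map (depol t) (theta a))"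
  hence "psd (tensor_map (depol t) (theta a) Om)" using Om_psd unfolding positive_map_def by blast
  hence "let z = Qf (tensor_map (depol t) (theta a) Om) wv in Im z = 0 \<and> 0 \<le> Re z"
    unfolding psd_def Qf_def by blast
  hence "0 \<le> 1 - t - 2*t*a" unfolding Om_val Let_def by simp
  hence "t * (2 * a + 1) \<le> 1" by (simp add: algebra_simps)
  thus "t \<le> 1 / (2 * a + 1)" using assms by (simp add: field_simps)
next
  assume "t \<le> 1 / (2 * a + 1)"
  hence "t * (2 * a + 1) \<le> 1" using assms by (simp add: field_simps)
  thus "positive_map (tensor_map (depol t) (theta a))"
    unfolding positive_map_def using suff assms by blast
qed


end
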